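(* Let $(E_j)_{j\in J}$ be a family of nonzero complete metrizable topological vector spaces with $J$ uncountable, and let $E_0=\{(x_j)\in\prod_{j\in J}E_j:|\{j:x_j\ne0\}|\le\aleph_0\}$ be the $\Sigma$-product, with the subspace topology of the product. Then $E_0$ is a Baire, non-metrizable Fréchet–Urysohn topological vector space which does not have countable $cn$-character.
   Context: For $x\in X$, a family $\mathcal{N}$ of subsets of $X$ is a $cn$-network at $x$ if for each neighborhood $O_x$ of $x$ the set $\bigcup\{N\in\mathcal{N}:x\in N\subseteq O_x\}$ is a neighborhood of $x$; the $cn$-character of $X$ is the supremum over $x$ of the least cardinality of a $cn$-network at $x$. *)

theory Defs
  imports "HOL-Analysis.Analysis"
begin

definition is_tvs ::
  "'a set \<Rightarrow> 'a topology \<Rightarrow> ('a \<Rightarrow> 'a \<Rightarrow> 'a) \<Rightarrow> (real \<Rightarrow> 'a \<Rightarrow> 'a) \<Rightarrow> 'a \<Rightarrow> bool" where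
  "is_tvs V X add smul z \<longleftrightarrow>
     topspace X = V \<and> z \<in> V \<and>
     (\<forall>x\<in>V. \<forall>y\<in>V. add x y \<in> V) \<and>
     (\<forall>c. \<forall>x\<in>V. smul c x \<in> V) \<and>
     (\<forall>x\<in>V. \<forall>y\<in>V. \<forall>w\<in>V. add (add x y) w = add x (add y w)) \<and>
     (\<forall>x\<in>V. \<forall>y\<in>V. add x y = add y x) \<and>
     (\<forall>x\<in>V. add z x = x) \<and>
     (\<forall>x\<in>V. \<exists>y\<in>V. add x y = z) \<and>
     (\<forall>a b. \<forall>x\<in>V. smul a (smul b x) = smul (a * b) x) \<and>
     (\<forall>x\<in>V. smul 1 x = x) \<and>
     (\<forall>a. \<forall>x\<in>V. \<forall>y\<in>V. smul a (add x y) = add (smul a x) (smul a y)) \<and>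
     (\<forall>a b. \<forall>x\<in>V. smul (a + b) x = add (smul a x) (smul b x)) \<and>
     continuous_map (prod_topology X X) X (\<lambda>(x, y). add x y) \<and>
     continuous_map (prod_topology euclideanreal X) X (\<lambda>(c, x). smul c x)"

definition Baire_space :: "'a topology \<Rightarrow> bool" where
  "Baire_space X \<longleftrightarrow>
     (\<forall>\<G>. countable \<G> \<and> (\<forall>U\<in>\<G>. openin X U \<and> X closure_of U = topspace X)
        \<longrightarrow> X closure_of (topspace X \<inter> \<Inter>\<G>) = topspace X)"

definition Frechet_Urysohn_space :: "'a topology \<Rightarrow> bool" where
  "Frechet_Urysohn_space X \<longleftrightarrow>
     (\<forall>A x. A \<subseteq> topspace X \<and> x \<in> X closure_of A \<longrightarrow>
        (\<exists>f. range f \<subseteq> A \<and> limitin X f x sequentially))"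

definition nbhd_in :: "'a topology \<Rightarrow> 'a \<Rightarrow> 'a set \<Rightarrow> bool" where
  "nbhd_in X x V \<longleftrightarrow> V \<subseteq> topspace X \<and> (\<exists>U. openin X U \<and> x \<in> U \<and> U \<subseteq> V)"

definition cn_network :: "'a topology \<Rightarrow> 'a \<Rightarrow> 'a set set \<Rightarrow> bool" where
  "cn_network X x \<N> \<longleftrightarrow>
     (\<forall>N\<in>\<N>. N \<subseteq> topspace X) \<and>
     (\<forall>W. nbhd_in X x W \<longrightarrow> nbhd_in X x (\<Union>{N\<in>\<N>. x \<in> N \<and> N \<subseteq> W}))"

text \<open>Countable cn-character: the supremum over all points of the least cardinality of a
  cn-network at the point is at most aleph_0, i.e. every point has a countable cn-network.\<close>
definition countable_cn_character :: "'a topology \<Rightarrow> bool" where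
  "countable_cn_character X \<longleftrightarrow>
     (\<forall>x\<in>topspace X. \<exists>\<N>. countable \<N> \<and> cn_network X x \<N>)"

definition Sigma_product :: "'j set \<Rightarrow> ('j \<Rightarrow> 'a::real_vector set) \<Rightarrow> ('j \<Rightarrow> 'a) set" where
  "Sigma_product J E = {x \<in> PiE J E. countable {j\<in>J. x j \<noteq> 0}}"

definition Sigma_topology :: "'j set \<Rightarrow> ('j \<Rightarrow> 'a::real_vector topology) \<Rightarrow> ('j \<Rightarrow> 'a) topology" where
  "Sigma_topology J T = subtopology (product_topology T J) (Sigma_product J (\<lambda>j. topspace (T j)))"

definition prod_add :: "'j set \<Rightarrow> ('j \<Rightarrow> 'a::real_vector) \<Rightarrow> ('j \<Rightarrow> 'a) \<Rightarrow> ('j \<Rightarrow> 'a)" where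
  "prod_add J x y = restrict (\<lambda>j. x j + y j) J"

definition prod_smul :: "'j set \<Rightarrow> real \<Rightarrow> ('j \<Rightarrow> 'a::real_vector) \<Rightarrow> ('j \<Rightarrow> 'a)" where
  "prod_smul J c x = restrict (\<lambda>j. c *\<^sub>R x j) J"

definition prod_zero :: "'j set \<Rightarrow> ('j \<Rightarrow> 'a::real_vector)" where
  "prod_zero J = restrict (\<lambda>j. 0) J"

end

theory Submission
  imports Defs
begin

definition bk_D :: "('s \<Rightarrow> 'j set) \<Rightarrow> (nat \<Rightarrow> 's) \<Rightarrow> nat \<Rightarrow> 'j set" where
  "bk_D supp h m = (\<Union>l\<le>m. supp (h l))"

definition bk_F :: "('s \<Rightarrow> 'j set) \<Rightarrow> (nat \<Rightarrow> 's) \<Rightarrow> nat \<Rightarrow> 'j set" where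
  "bk_F supp h n = (\<Union>m\<le>n. from_nat_into (bk_D supp h m) ` {..n})"

lemma bk_D_cong: "(\<And>l. l \<le> m \<Longrightarrow> h l = h' l) \<Longrightarrow> bk_D supp h m = bk_D supp h' m"
  unfolding bk_D_def by auto

lemma bk_F_cong: "(\<And>l. l \<le> n \<Longrightarrow> h l = h' l) \<Longrightarrow> bk_F supp h n = bk_F supp h' n"
  unfolding bk_F_def using bk_D_cong[of _ h h' supp]
  by (intro SUP_cong refl) (metis (no_types, lifting) atMost_iff order_trans)

lemma bookkeeping:
  fixes s0 :: 's and supp :: "'s \<Rightarrow> 'j set" and step :: "nat \<Rightarrow> 'j set \<Rightarrow> 's \<Rightarrow> 's \<Rightarrow> bool"
  assumes "Inv s0" "\<And>s. Inv s \<Longrightarrow> countable (supp s)"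
    and "\<And>n F s. finite F \<Longrightarrow> Inv s \<Longrightarrow> \<exists>s'. Inv s' \<and> step n F s s'"
  shows "\<exists>x F. x 0 = s0 \<and> (\<forall>n. Inv (x n) \<and> finite (F n) \<and> step n (F n) (x n) (x (Suc n)))
            \<and> (\<forall>l. \<forall>i \<in> supp (x l). \<exists>N. \<forall>n\<ge>N. i \<in> F n)"
proof -
  define nxt where "nxt h n = (SOME s'. Inv s' \<and> step n (bk_F supp h n) (h n) s')" for h n
  define H where "H = rec_nat (\<lambda>_. s0) (\<lambda>n h. h(Suc n := nxt h n))"
  have H0: "H 0 = (\<lambda>_. s0)" by (simp add: H_def)
  have HS: "H (Suc n) = (H n)(Suc n := nxt (H n) n)" for n by (simp add: H_def)
  define x where "x n = H n n" for n
  have key: "(\<forall>l\<le>n. H n l = x l) \<and> Inv (x n)" for n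
  proof (induction n)
    case 0
    have "H 0 0 = s0" by (simp add: H0)
    then show ?case using assms(1) unfolding x_def by (metis le_zero_eq)
  next
    case (Suc n)
    then have IH: "\<And>l. l \<le> n \<Longrightarrow> H n l = x l" "Inv (H n n)" by (metis x_def order_refl)+
    have fin: "finite (bk_F supp (H n) n)" unfolding bk_F_def by auto
    have "Inv (nxt (H n) n)" unfolding nxt_def
      using someI_ex[OF assms(3)[OF fin IH(2), of n]] by blast
    moreover have "x (Suc n) = nxt (H n) n" by (simp add: x_def HS)
    moreover have "H (Suc n) l = x l" if "l \<le> Suc n" for l
    proof (cases "l = Suc n")
      case True then show ?thesis by (simp add: x_def)
    next
      case False then have "l \<le> n" using that by simp
      then show ?thesis using IH(1)[of l] False by (simp add: HS)
    qed
    ultimately show ?case by simp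
  qed
  define F where "F n = bk_F supp x n" for n
  have xS: "x (Suc n) = nxt x n" for n
  proof -
    have "x (Suc n) = nxt (H n) n" by (simp add: x_def HS)
    also have "nxt (H n) n = nxt x n" unfolding nxt_def
      using bk_F_cong[of n "H n" x supp] key[of n] by simp
    finally show ?thesis .
  qed
  have stp: "Inv (x n) \<and> finite (F n) \<and> step n (F n) (x n) (x (Suc n))" for n
  proof -
    have fin: "finite (F n)" unfolding F_def bk_F_def by auto
    have "Inv (x n)" using key by blast
    then have "Inv (x (Suc n)) \<and> step n (F n) (x n) (x (Suc n))"
      unfolding xS nxt_def F_def using someI_ex[OF assms(3)[OF fin[unfolded F_def]]] by blast
    then show ?thesis using fin key by blast
  qed
  have cov: "\<exists>N. \<forall>n\<ge>N. i \<in> F n" if "i \<in> supp (x l)" for l i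
  proof -
    have c: "countable (bk_D supp x l)" unfolding bk_D_def using assms(2) key by blast
    have "i \<in> bk_D supp x l" using that unfolding bk_D_def by auto
    then obtain k where k: "from_nat_into (bk_D supp x l) k = i" using from_nat_into_surj[OF c] by blast
    show ?thesis
    proof (intro exI allI impI)
      fix n assume "max l k \<le> n"
      then have "l \<le> n" "k \<le> n" by auto
      then show "i \<in> F n" unfolding F_def bk_F_def using k by blast
    qed
  qed
  show ?thesis
  proof (rule exI[of _ x], rule exI[of _ F], intro conjI allI)
    show "x 0 = s0" using key[of 0] by (simp add: x_def H0)
  qed (use stp cov in blast)+
qed


lemma topspace_Sigma: "topspace (Sigma_topology J T) = Sigma_product J (\<lambda>j. topspace (T j))"
  unfolding Sigma_topology_def Sigma_product_def by auto

lemma prod_zero_in: "(\<And>j. j \<in> J \<Longrightarrow> 0 \<in> topspace (T j)) \<Longrightarrow> prod_zero J \<in> Sigma_product J (\<lambda>j. topspace (T j))"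
  unfolding prod_zero_def Sigma_product_def by auto

lemma cont_proj_Sigma: "j \<in> J \<Longrightarrow> continuous_map (Sigma_topology J T) (T j) (\<lambda>x. x j)"
  unfolding Sigma_topology_def
  by (intro continuous_map_from_subtopology continuous_map_product_projection)

lemma not_cn:
  fixes J :: "'j set" and T :: "'j \<Rightarrow> 'a::real_vector topology"
  assumes "uncountable J"
    and z0: "\<And>j. j \<in> J \<Longrightarrow> 0 \<in> topspace (T j)"
    and sep: "\<And>j. j \<in> J \<Longrightarrow> \<exists>e U. e \<in> topspace (T j) \<and> openin (T j) U \<and> 0 \<in> U \<and> e \<notin> U"
  shows "\<not> countable_cn_character (Sigma_topology J T)"
proof
  define X where "X = Sigma_topology J T"
  define S where "S = Sigma_product J (\<lambda>j. topspace (T j))"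
  define z :: "'j \<Rightarrow> 'a" where "z = prod_zero J"
  have tX: "topspace X = S" by (simp add: X_def S_def topspace_Sigma)
  have zS: "z \<in> S" unfolding z_def S_def using prod_zero_in z0 by blast
  assume "countable_cn_character (Sigma_topology J T)"
  then obtain \<N> where Nc: "countable \<N>" and cn: "cn_network X z \<N>"
    unfolding countable_cn_character_def X_def[symmetric] using tX zS by blast
  obtain e U where eU: "\<And>j. j \<in> J \<Longrightarrow> e j \<in> topspace (T j) \<and> openin (T j) (U j) \<and> 0 \<in> U j \<and> e j \<notin> U j"
    using sep by metis
  define W where "W j = {x \<in> topspace X. x j \<in> U j}" for j
  have Wopen: "openin X (W j)" if "j \<in> J" for j
    unfolding W_def X_def using openin_continuous_map_preimage[OF cont_proj_Sigma[OF that] ] eU that by blast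
  have zW: "z \<in> W j" if "j \<in> J" for j
    using zS tX eU that unfolding W_def z_def prod_zero_def by auto
  have nbW: "nbhd_in X z (W j)" if "j \<in> J" for j
    unfolding nbhd_in_def using Wopen[OF that] zW[OF that] unfolding W_def by blast
  define SN where "SN N = {i \<in> J. N \<subseteq> W i}" for N
  define K where "K = \<Union>{SN N |N. N \<in> \<N> \<and> finite (SN N)}"
  have "K = (\<Union>N\<in>{N\<in>\<N>. finite (SN N)}. SN N)" unfolding K_def by blast
  also have "countable \<dots>" using Nc by (intro countable_UN) (auto intro: countable_finite)
  finally have "countable K" .
  then obtain j where jJ: "j \<in> J" and jK: "j \<notin> K"
    using assms(1) by (metis countable_subset subsetI)
  define Nj where "Nj = {N\<in>\<N>. z \<in> N \<and> N \<subseteq> W j}"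
  have "nbhd_in X z (\<Union>Nj)" using cn nbW[OF jJ] unfolding cn_network_def Nj_def by blast
  then obtain Q where Q: "openin X Q" "z \<in> Q" "Q \<subseteq> \<Union>Nj" unfolding nbhd_in_def by blast
  then obtain Q' where Q': "openin (product_topology T J) Q'" "Q = Q' \<inter> S"
    unfolding X_def Sigma_topology_def S_def openin_subtopology by blast
  have "z \<in> Q'" using Q(2) unfolding Q'(2) by simp
  then obtain V where V: "finite {i \<in> J. V i \<noteq> topspace (T i)}" "\<And>i. i \<in> J \<Longrightarrow> openin (T i) (V i)"
     "z \<in> Pi\<^sub>E J V" "Pi\<^sub>E J V \<subseteq> Q'"
  proof -
    have "\<forall>x\<in>Q'. \<exists>U. finite {i \<in> J. U i \<noteq> topspace (T i)} \<and> (\<forall>i\<in>J. openin (T i) (U i)) \<and> x \<in> Pi\<^sub>E J U \<and> Pi\<^sub>E J U \<subseteq> Q'"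
      using Q'(1) unfolding openin_product_topology_alt .
    then show ?thesis using \<open>z \<in> Q'\<close> that by metis
  qed
  define G where "G = {i \<in> J. V i \<noteq> topspace (T i)}"
  have "\<exists>c. c \<in> SN N - G" if "N \<in> Nj" for N
  proof -
    have "j \<in> SN N" using that jJ unfolding Nj_def SN_def by auto
    moreover have "N \<in> \<N>" using that unfolding Nj_def by auto
    ultimately have "infinite (SN N)" using jK unfolding K_def by blast
    then have "infinite (SN N - G)" using V(1) unfolding G_def by (metis finite_Diff2)
    then show ?thesis by (metis ex_in_conv finite.emptyI)
  qed
  then obtain c where c: "\<And>N. N \<in> Nj \<Longrightarrow> c N \<in> SN N - G" by metis
  define C where "C = c ` Nj"
  have "countable C" unfolding C_def Nj_def using Nc by auto
  define p where "p = restrict (\<lambda>i. if i \<in> C then e i else 0) J"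
  have pS: "p \<in> S"
  proof -
    have "p \<in> Pi\<^sub>E J (\<lambda>j. topspace (T j))" unfolding p_def using eU z0 by auto
    moreover have "{i \<in> J. p i \<noteq> 0} \<subseteq> C" unfolding p_def by auto
    ultimately show ?thesis unfolding S_def Sigma_product_def
      using \<open>countable C\<close> countable_subset by blast
  qed
  have "p \<in> Pi\<^sub>E J V"
  proof -
    have "p i \<in> V i" if "i \<in> J" for i
    proof (cases "i \<in> G")
      case True
      then have "i \<notin> C" using c unfolding C_def by auto
      then have "p i = z i" using that unfolding p_def z_def prod_zero_def by auto
      then show ?thesis using V(3) that by auto
    next
      case False
      then have "V i = topspace (T i)" using that unfolding G_def by auto
      then show ?thesis using pS that unfolding S_def Sigma_product_def by auto
    qed
    then show ?thesis unfolding p_def by auto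
  qed
  then have "p \<in> Q" using V(4) Q'(2) pS by auto
  then obtain N where N: "N \<in> Nj" "p \<in> N" using Q(3) by auto
  have cN: "c N \<in> SN N" "c N \<in> C" using c[OF N(1)] unfolding C_def using N(1) by auto
  then have "c N \<in> J" "N \<subseteq> W (c N)" unfolding SN_def by auto
  then have "p (c N) \<in> U (c N)" using N(2) unfolding W_def by auto
  moreover have "p (c N) = e (c N)" using cN \<open>c N \<in> J\<close> unfolding p_def by auto
  ultimately show False using eU \<open>c N \<in> J\<close> by auto
qed


lemma cm_into_Sigma: "continuous_map Z (product_topology T J) f \<Longrightarrow> f ` topspace Z \<subseteq> Sigma_product J (\<lambda>j. topspace (T j)) \<Longrightarrow> continuous_map Z (Sigma_topology J T) f"
  unfolding Sigma_topology_def by (simp add: continuous_map_in_subtopology image_subset_iff_funcset)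

lemma sigma_tvs:
  fixes J :: "'j set" and T :: "'j \<Rightarrow> 'a::real_vector topology"
  assumes sub: "\<And>j. j \<in> J \<Longrightarrow> subspace (topspace (T j))"
    and cadd: "\<And>j. j \<in> J \<Longrightarrow> continuous_map (prod_topology (T j) (T j)) (T j) (\<lambda>(x, y). x + y)"
    and csm: "\<And>j. j \<in> J \<Longrightarrow> continuous_map (prod_topology euclideanreal (T j)) (T j) (\<lambda>(c, x). c *\<^sub>R x)"
  shows "is_tvs (Sigma_product J (\<lambda>j. topspace (T j))) (Sigma_topology J T)
            (prod_add J) (prod_smul J) (prod_zero J)"
proof -
  define S where "S = Sigma_product J (\<lambda>j. topspace (T j))"
  define X where "X = Sigma_topology J T"
  have z0: "0 \<in> topspace (T j)" if "j \<in> J" for j using sub[OF that] by (rule subspace_0)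
  have memS: "x \<in> S \<longleftrightarrow> x \<in> Pi\<^sub>E J (\<lambda>j. topspace (T j)) \<and> countable {j\<in>J. x j \<noteq> 0}" for x
    unfolding S_def Sigma_product_def by simp
  have ext: "x \<in> extensional J" if "x \<in> S" for x using that memS by (auto simp: PiE_def)
  have addS: "prod_add J x y \<in> S" if "x \<in> S" "y \<in> S" for x y
  proof -
    have "{j\<in>J. prod_add J x y j \<noteq> 0} \<subseteq> {j\<in>J. x j \<noteq> 0} \<union> {j\<in>J. y j \<noteq> 0}"
      unfolding prod_add_def by auto
    moreover have "prod_add J x y \<in> Pi\<^sub>E J (\<lambda>j. topspace (T j))"
      using that memS sub unfolding prod_add_def by (auto intro: subspace_add)
    ultimately show ?thesis using that memS by (meson countable_Un countable_subset)
  qed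
  have smS: "prod_smul J c x \<in> S" if "x \<in> S" for c x
  proof -
    have "{j\<in>J. prod_smul J c x j \<noteq> 0} \<subseteq> {j\<in>J. x j \<noteq> 0}"
      unfolding prod_smul_def by auto
    moreover have "prod_smul J c x \<in> Pi\<^sub>E J (\<lambda>j. topspace (T j))"
      using that memS sub unfolding prod_smul_def by (auto intro: subspace_scale)
    ultimately show ?thesis using that memS by (meson countable_subset)
  qed
  have zS: "prod_zero J \<in> S" unfolding memS prod_zero_def using z0 by auto
  have negS: "\<exists>y\<in>S. prod_add J x y = prod_zero J" if "x \<in> S" for x
  proof
    show "restrict (\<lambda>j. - x j) J \<in> S"
    proof -
      have "{j\<in>J. restrict (\<lambda>j. - x j) J j \<noteq> 0} = {j\<in>J. x j \<noteq> 0}" by auto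
      moreover have "restrict (\<lambda>j. - x j) J \<in> Pi\<^sub>E J (\<lambda>j. topspace (T j))"
        using that memS sub by (auto intro: subspace_neg)
      ultimately show ?thesis using that unfolding memS by simp
    qed
    show "prod_add J x (restrict (\<lambda>j. - x j) J) = prod_zero J"
      unfolding prod_add_def prod_zero_def by auto
  qed
  have tX: "topspace X = S" unfolding X_def S_def by (rule topspace_Sigma)
  have cadd': "continuous_map (prod_topology X X) X (\<lambda>(x, y). prod_add J x y)"
  proof -
    have "continuous_map (prod_topology X X) (product_topology T J) (\<lambda>(x, y). prod_add J x y)"
      unfolding continuous_map_componentwise
    proof (intro conjI ballI)
      show "(\<lambda>(x, y). prod_add J x y) ` topspace (prod_topology X X) \<subseteq> extensional J"
        unfolding prod_add_def by auto
      fix k assume k: "k \<in> J"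
      have "continuous_map (prod_topology X X) (T k) ((\<lambda>(a, b). a + b) \<circ> (\<lambda>(x, y). (x k, y k)))"
      proof (rule continuous_map_compose[OF _ cadd[OF k]])
        have "continuous_map (prod_topology X X) (T k) (\<lambda>p. fst p k)"
          using continuous_map_compose[OF continuous_map_fst cont_proj_Sigma[OF k]] unfolding X_def
          by (simp add: o_def)
        moreover have "continuous_map (prod_topology X X) (T k) (\<lambda>p. snd p k)"
          using continuous_map_compose[OF continuous_map_snd cont_proj_Sigma[OF k]] unfolding X_def
          by (simp add: o_def)
        ultimately show "continuous_map (prod_topology X X) (prod_topology (T k) (T k)) (\<lambda>(x, y). (x k, y k))"
          using continuous_map_pairedI by (simp add: case_prod_beta')
      qed
      then show "continuous_map (prod_topology X X) (T k) (\<lambda>x. (case x of (x, y) \<Rightarrow> prod_add J x y) k)"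
        using k by (simp add: prod_add_def o_def case_prod_beta')
    qed
    moreover have "(\<lambda>(x, y). prod_add J x y) ` topspace (prod_topology X X) \<subseteq> S"
      using addS tX by auto
    ultimately show ?thesis unfolding S_def by (subst (3) X_def) (rule cm_into_Sigma)
  qed
  have csm': "continuous_map (prod_topology euclideanreal X) X (\<lambda>(c, x). prod_smul J c x)"
  proof -
    have "continuous_map (prod_topology euclideanreal X) (product_topology T J) (\<lambda>(c, x). prod_smul J c x)"
      unfolding continuous_map_componentwise
    proof (intro conjI ballI)
      show "(\<lambda>(c, x). prod_smul J c x) ` topspace (prod_topology euclideanreal X) \<subseteq> extensional J"
        unfolding prod_smul_def by auto
      fix k assume k: "k \<in> J"
      have "continuous_map (prod_topology euclideanreal X) (T k) ((\<lambda>(a, b). a *\<^sub>R b) \<circ> (\<lambda>(c, x). (c, x k)))"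
      proof (rule continuous_map_compose[OF _ csm[OF k]])
        have "continuous_map (prod_topology euclideanreal X) euclideanreal (\<lambda>p. fst p)"
          by (rule continuous_map_fst)
        moreover have "continuous_map (prod_topology euclideanreal X) (T k) (\<lambda>p. snd p k)"
          using continuous_map_compose[OF continuous_map_snd cont_proj_Sigma[OF k]] unfolding X_def
          by (simp add: o_def)
        ultimately show "continuous_map (prod_topology euclideanreal X) (prod_topology euclideanreal (T k)) (\<lambda>(c, x). (c, x k))"
          using continuous_map_pairedI by (simp add: case_prod_beta')
      qed
      then show "continuous_map (prod_topology euclideanreal X) (T k) (\<lambda>x. (case x of (c, x) \<Rightarrow> prod_smul J c x) k)"
        using k by (simp add: prod_smul_def o_def case_prod_beta')
    qed
    moreover have "(\<lambda>(c, x). prod_smul J c x) ` topspace (prod_topology euclideanreal X) \<subseteq> S"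
      using smS tX by auto
    ultimately show ?thesis unfolding S_def by (subst (2) X_def) (rule cm_into_Sigma)
  qed
  show ?thesis
    unfolding is_tvs_def S_def[symmetric] X_def[symmetric]
  proof (intro conjI ballI allI)
    show "topspace X = S" by (rule tX)
    show "prod_zero J \<in> S" by (rule zS)
    show "prod_add J x y \<in> S" if "x \<in> S" "y \<in> S" for x y using addS that .
    show "prod_smul J c x \<in> S" if "x \<in> S" for c x using smS that .
    show "\<exists>y\<in>S. prod_add J x y = prod_zero J" if "x \<in> S" for x using negS that .
    show "continuous_map (prod_topology X X) X (\<lambda>(x, y). prod_add J x y)" by (rule cadd')
    show "continuous_map (prod_topology euclideanreal X) X (\<lambda>(c, x). prod_smul J c x)" by (rule csm')
  next
    fix x y w assume "x \<in> S" "y \<in> S" "w \<in> S"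
    then show "prod_add J (prod_add J x y) w = prod_add J x (prod_add J y w)"
      unfolding prod_add_def by (auto simp: add.assoc)
  next
    fix x y assume "x \<in> S" "y \<in> S"
    then show "prod_add J x y = prod_add J y x"
      unfolding prod_add_def by (auto simp: add.commute)
  next
    fix x assume "x \<in> S"
    then show "prod_add J (prod_zero J) x = x"
      unfolding prod_add_def prod_zero_def using ext[of x] by (auto simp: extensional_def fun_eq_iff)
  next
    fix a b x assume "x \<in> S"
    then show "prod_smul J a (prod_smul J b x) = prod_smul J (a * b) x"
      unfolding prod_smul_def by auto
  next
    fix x assume "x \<in> S"
    then show "prod_smul J 1 x = x"
      unfolding prod_smul_def using ext[of x] by (auto simp: extensional_def fun_eq_iff)
  next
    fix a x y assume "x \<in> S" "y \<in> S"
    then show "prod_smul J a (prod_add J x y) = prod_add J (prod_smul J a x) (prod_smul J a y)"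
      unfolding prod_smul_def prod_add_def by (auto simp: scaleR_right_distrib)
  next
    fix a b x assume "x \<in> S"
    then show "prod_smul J (a + b) x = prod_add J (prod_smul J a x) (prod_smul J b x)"
      unfolding prod_smul_def prod_add_def by (auto simp: scaleR_left_distrib)
  qed
qed

lemma first_countable_cn:
  assumes "first_countable X" shows "countable_cn_character X"
  unfolding countable_cn_character_def
proof
  fix x assume x: "x \<in> topspace X"
  then obtain B where B: "countable B" "\<And>V. V \<in> B \<Longrightarrow> openin X V"
    "\<And>U. openin X U \<Longrightarrow> x \<in> U \<Longrightarrow> \<exists>V\<in>B. x \<in> V \<and> V \<subseteq> U"
    using assms unfolding first_countable_def by metis
  have "cn_network X x B"
    unfolding cn_network_def
  proof (intro conjI allI impI ballI)
    show "N \<subseteq> topspace X" if "N \<in> B" for N using B(2)[OF that] openin_subset by blast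
    fix W assume "nbhd_in X x W"
    then obtain U where U: "openin X U" "x \<in> U" "U \<subseteq> W" "W \<subseteq> topspace X" unfolding nbhd_in_def by blast
    then obtain V where V: "V \<in> B" "x \<in> V" "V \<subseteq> U" using B(3) by blast
    show "nbhd_in X x (\<Union>{N \<in> B. x \<in> N \<and> N \<subseteq> W})"
      unfolding nbhd_in_def
    proof (intro conjI exI)
      show "\<Union>{N \<in> B. x \<in> N \<and> N \<subseteq> W} \<subseteq> topspace X" using U(4) by blast
      show "openin X V" "x \<in> V" using B(2) V by auto
      show "V \<subseteq> \<Union>{N \<in> B. x \<in> N \<and> N \<subseteq> W}" using V U(3) by blast
    qed
  qed
  then show "\<exists>\<N>. countable \<N> \<and> cn_network X x \<N>" using B(1) by blast
qed

lemma sigma_FU: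
  fixes J :: "'j set" and T :: "'j \<Rightarrow> 'a::real_vector topology"
  assumes z0: "\<And>j. j \<in> J \<Longrightarrow> 0 \<in> topspace (T j)"
    and fc: "\<And>j. j \<in> J \<Longrightarrow> first_countable (T j)"
  shows "Frechet_Urysohn_space (Sigma_topology J T)"
  unfolding Frechet_Urysohn_space_def
proof (intro allI impI, elim conjE)
  define X where "X = Sigma_topology J T"
  define S where "S = Sigma_product J (\<lambda>j. topspace (T j))"
  have tX: "topspace X = S" by (simp add: X_def S_def topspace_Sigma)
  fix A x assume AX: "A \<subseteq> topspace (Sigma_topology J T)" and xcl: "x \<in> Sigma_topology J T closure_of A"
  then have AS: "A \<subseteq> S" and xcl': "x \<in> X closure_of A" using tX X_def by auto
  have xS: "x \<in> S" using xcl' closure_of_subset_topspace[of X A] tX by blast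
  have xi: "x i \<in> topspace (T i)" if "i \<in> J" for i using xS that unfolding S_def Sigma_product_def by auto
  have "\<exists>bi. (\<forall>k::nat. openin (T i) (bi k) \<and> x i \<in> bi k) \<and> (\<forall>U. openin (T i) U \<and> x i \<in> U \<longrightarrow> (\<exists>k. bi k \<subseteq> U))"
    if i: "i \<in> J" for i
  proof -
    obtain B where B: "countable B" "\<And>V. V \<in> B \<Longrightarrow> openin (T i) V"
      "\<And>U. openin (T i) U \<Longrightarrow> x i \<in> U \<Longrightarrow> \<exists>V\<in>B. x i \<in> V \<and> V \<subseteq> U"
      using fc[OF i] xi[OF i] unfolding first_countable_def by metis
    define BB where "BB = {V \<in> B. x i \<in> V}"
    have "BB \<noteq> {}" using B(3)[of "topspace (T i)"] xi[OF i] unfolding BB_def by auto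
    moreover have "countable BB" using B(1) unfolding BB_def by auto
    ultimately have r: "range (from_nat_into BB) = BB" by (rule range_from_nat_into)
    have 1: "openin (T i) (from_nat_into BB k) \<and> x i \<in> from_nat_into BB k" for k
    proof -
      have "from_nat_into BB k \<in> BB" using r by blast
      then have "from_nat_into BB k \<in> B" "x i \<in> from_nat_into BB k" unfolding BB_def by simp_all
      then show ?thesis using B(2) by simp
    qed
    have 2: "\<exists>k. from_nat_into BB k \<subseteq> U" if U: "openin (T i) U" "x i \<in> U" for U
    proof -
      obtain V where "V \<in> B" "x i \<in> V" "V \<subseteq> U" using B(3)[OF U] by blast
      then have "V \<in> BB" "V \<subseteq> U" unfolding BB_def by simp_all
      then have "V \<in> range (from_nat_into BB)" "V \<subseteq> U" using r by simp_all
      then show ?thesis by blast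
    qed
    show ?thesis
      apply (rule exI[where x="from_nat_into BB"])
      using 1 2 by blast
  qed
  then obtain b :: "'j \<Rightarrow> nat \<Rightarrow> 'a set" where b: "\<And>i k. i \<in> J \<Longrightarrow> openin (T i) (b i k) \<and> x i \<in> b i k"
    "\<And>i U. i \<in> J \<Longrightarrow> openin (T i) U \<Longrightarrow> x i \<in> U \<Longrightarrow> \<exists>k. b i k \<subseteq> U"
    by metis
  define supp where "supp s = {i\<in>J. s i \<noteq> (0::'a)}" for s :: "'j \<Rightarrow> 'a"
  define Inv where "Inv s = (s \<in> S)" for s :: "'j \<Rightarrow> 'a"
  define step where "step n F s s' = (s' \<in> A \<and> (\<forall>i\<in>F \<inter> J. \<forall>k\<le>n. s' i \<in> b i k))"
    for n :: nat and F :: "'j set" and s s' :: "'j \<Rightarrow> 'a"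
  have st: "\<exists>s'. Inv s' \<and> step n F s s'" if "finite F" for n F s
  proof -
    define Ob where "Ob = (\<Inter>p \<in> (F \<inter> J) \<times> {..n}. {y \<in> topspace X. y (fst p) \<in> b (fst p) (snd p)}) \<inter> topspace X"
    have "openin X Ob" unfolding Ob_def
    proof (rule openin_INT)
      show "finite ((F \<inter> J) \<times> {..n})" using that by auto
      fix p assume "p \<in> (F \<inter> J) \<times> {..n}"
      then have "fst p \<in> J" by auto
      then show "openin X {y \<in> topspace X. y (fst p) \<in> b (fst p) (snd p)}"
        unfolding X_def using openin_continuous_map_preimage[OF cont_proj_Sigma[of "fst p" J T]] b(1) by blast
    qed
    moreover have "x \<in> Ob" unfolding Ob_def using xS tX b(1) by auto
    ultimately obtain a where "a \<in> A" "a \<in> Ob" using xcl' unfolding in_closure_of by blast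
    then show ?thesis unfolding Inv_def step_def Ob_def using AS by auto
  qed
  have cs: "countable (supp s)" if "Inv s" for s
    using that unfolding Inv_def S_def Sigma_product_def supp_def by auto
  obtain y F where yF: "y 0 = x" "\<And>n. Inv (y n) \<and> finite (F n) \<and> step n (F n) (y n) (y (Suc n))"
    "\<And>l i. i \<in> supp (y l) \<Longrightarrow> \<exists>N. \<forall>n\<ge>N. i \<in> F n"
    using bookkeeping[of Inv x supp step, OF _ cs st] xS unfolding Inv_def by blast
  define f where "f n = y (Suc n)" for n
  have fA: "f n \<in> A" for n using yF(2)[of n] unfolding step_def f_def by auto
  have lim_i: "limitin (T i) (\<lambda>n. f n i) (x i) sequentially" if i: "i \<in> J" for i
  proof (cases "\<exists>l. i \<in> supp (y l)")
    case True
    then obtain N where N: "\<And>n. n \<ge> N \<Longrightarrow> i \<in> F n" using yF(3) by blast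
    show ?thesis unfolding limitin_sequentially
    proof (intro conjI allI impI)
      show "x i \<in> topspace (T i)" using xi[OF i] .
      fix U assume "openin (T i) U \<and> x i \<in> U"
      then obtain k where k: "b i k \<subseteq> U" using b(2) i by blast
      show "\<exists>N. \<forall>n\<ge>N. f n i \<in> U"
      proof (intro exI allI impI)
        fix n assume "max N k \<le> n"
        then have "i \<in> F n" "k \<le> n" using N by auto
        then show "f n i \<in> U" using yF(2)[of n] k i unfolding step_def f_def by auto
      qed
    qed
  next
    case False
    then have "y l i = 0" for l using i unfolding supp_def by auto
    then have "x i = 0" "\<And>n. f n i = 0" using yF(1) unfolding f_def by metis+
    then show ?thesis using z0[OF i] by simp
  qed
  have "limitin X f x sequentially"
    unfolding X_def Sigma_topology_def limitin_subtopology limitin_componentwise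
  proof (intro conjI)
    show "x \<in> Sigma_product J (\<lambda>j. topspace (T j))" using xS S_def by simp
    show "\<forall>\<^sub>F a in sequentially. f a \<in> Sigma_product J (\<lambda>j. topspace (T j))"
      using fA AS S_def by (simp add: subset_iff)
    show "x \<in> extensional J" using xS unfolding S_def Sigma_product_def by (auto simp: PiE_def)
    show "\<forall>\<^sub>F a in sequentially. f a \<in> topspace (product_topology T J)"
      using fA AS unfolding S_def Sigma_product_def by (simp add: subset_iff)
    show "\<forall>i\<in>J. limitin (T i) (\<lambda>c. f c i) (x i) sequentially" using lim_i by blast
  qed
  then show "\<exists>f. range f \<subseteq> A \<and> limitin (Sigma_topology J T) f x sequentially"
    using fA X_def by blast
qed


definition basicU :: "'j set \<Rightarrow> ('j \<Rightarrow> 'a topology) \<Rightarrow> ('j \<Rightarrow> 'a set) \<Rightarrow> bool" where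
  "basicU J T U \<longleftrightarrow> finite {i \<in> J. U i \<noteq> topspace (T i)} \<and> (\<forall>i\<in>J. openin (T i) (U i))"

lemma sigma_baire:
  fixes J :: "'j set" and T :: "'j \<Rightarrow> 'a::real_vector topology" and dd :: "'j \<Rightarrow> 'a \<Rightarrow> 'a \<Rightarrow> real"
  assumes z0: "\<And>j. j \<in> J \<Longrightarrow> 0 \<in> topspace (T j)"
    and shrink: "\<And>j U p e. j \<in> J \<Longrightarrow> openin (T j) U \<Longrightarrow> p \<in> U \<Longrightarrow> e > 0 \<Longrightarrow>
        \<exists>V. openin (T j) V \<and> p \<in> V \<and> T j closure_of V \<subseteq> U \<and> (\<forall>a\<in>V. \<forall>b\<in>V. dd j a b < e)"
    and compl: "\<And>j \<sigma>. j \<in> J \<Longrightarrow> range \<sigma> \<subseteq> topspace (T j) \<Longrightarrow>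
        (\<forall>e>0. \<exists>N. \<forall>n\<ge>N. \<forall>m\<ge>N. dd j (\<sigma> n) (\<sigma> m) < e) \<Longrightarrow> \<exists>l. limitin (T j) \<sigma> l sequentially"
  shows "Baire_space (Sigma_topology J T)"
  unfolding Baire_space_def
proof (intro allI impI, elim conjE)
  define X where "X = Sigma_topology J T"
  define S where "S = Sigma_product J (\<lambda>j. topspace (T j))"
  have tX: "topspace X = S" by (simp add: X_def S_def topspace_Sigma)
  have XS: "X = subtopology (product_topology T J) S" by (simp add: X_def S_def Sigma_topology_def)
  have SPi: "S \<subseteq> Pi\<^sub>E J (\<lambda>j. topspace (T j))" unfolding S_def Sigma_product_def by auto
  fix \<G> assume Gc: "countable \<G>" and Gd: "\<forall>U\<in>\<G>. openin (Sigma_topology J T) U \<and> Sigma_topology J T closure_of U = topspace (Sigma_topology J T)"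
  then have Gd': "\<And>G. G \<in> \<G> \<Longrightarrow> openin X G \<and> X closure_of G = topspace X" using X_def by auto
  show "Sigma_topology J T closure_of (topspace (Sigma_topology J T) \<inter> \<Inter>\<G>) = topspace (Sigma_topology J T)"
    unfolding X_def[symmetric] dense_intersects_open
  proof (intro allI impI, elim conjE)
    fix V0 assume V0: "openin X V0" "V0 \<noteq> {}"
    show "topspace X \<inter> \<Inter>\<G> \<inter> V0 \<noteq> {}"
    proof (cases "\<G> = {}")
      case True then show ?thesis using V0 openin_subset by fastforce
    next
      case False
      define Gn where "Gn n = from_nat_into \<G> n" for n
      have Gr: "range Gn = \<G>" unfolding Gn_def using range_from_nat_into[OF False Gc] .
      have Gn: "openin X (Gn n) \<and> X closure_of (Gn n) = topspace X" for n using Gd' Gr by blast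
      obtain p0 where p0: "p0 \<in> V0" using V0 by blast
      obtain O0 where O0: "openin (product_topology T J) O0" "V0 = O0 \<inter> S"
        using V0(1) unfolding XS openin_subtopology by blast
      have "p0 \<in> O0" using p0 O0 by blast
      then obtain U0 where U0: "basicU J T U0" "p0 \<in> Pi\<^sub>E J U0" "Pi\<^sub>E J U0 \<subseteq> O0"
        using O0(1) unfolding openin_product_topology_alt basicU_def by meson
      define supp where "supp s = {i\<in>J. fst s i \<noteq> (0::'a)}" for s :: "('j \<Rightarrow> 'a) \<times> ('j \<Rightarrow> 'a set)"
      define Inv where "Inv s = (fst s \<in> S \<and> fst s \<in> Pi\<^sub>E J (snd s) \<and> basicU J T (snd s))"
        for s :: "('j \<Rightarrow> 'a) \<times> ('j \<Rightarrow> 'a set)"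
      define step where "step n F s s' = (S \<inter> Pi\<^sub>E J (snd s') \<subseteq> Gn n \<and>
           (\<forall>i\<in>J. T i closure_of (snd s' i) \<subseteq> snd s i) \<and>
           (\<forall>i\<in>F \<inter> J. \<forall>a\<in>snd s' i. \<forall>b\<in>snd s' i. dd i a b < inverse (real (Suc n))))"
        for n :: nat and F :: "'j set" and s s' :: "('j \<Rightarrow> 'a) \<times> ('j \<Rightarrow> 'a set)"
      have cs: "countable (supp s)" if "Inv s" for s
        using that unfolding Inv_def S_def Sigma_product_def supp_def by auto
      have st: "\<exists>s'. Inv s' \<and> step n F s s'" if F: "finite F" and I: "Inv s" for n F s
      proof -
        obtain p U where s: "s = (p, U)" by fastforce
        have pS: "p \<in> S" and pU: "p \<in> Pi\<^sub>E J U" and bU: "basicU J T U" using I unfolding s Inv_def by auto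
        define Ob where "Ob = Pi\<^sub>E J U \<inter> S"
        have "openin (product_topology T J) (Pi\<^sub>E J U)"
          using bU unfolding basicU_def openin_PiE_gen by blast
        then have Ob: "openin X Ob" unfolding XS Ob_def openin_subtopology by blast
        have "p \<in> Ob" using pS pU Ob_def by blast
        then have "Gn n \<inter> Ob \<noteq> {}" using Gn[of n] Ob unfolding dense_intersects_open by blast
        then obtain p' where p': "p' \<in> Gn n" "p' \<in> Ob" by blast
        have "openin X (Gn n \<inter> Ob)" using Gn Ob by blast
        then obtain W' where W': "openin (product_topology T J) W'" "Gn n \<inter> Ob = W' \<inter> S"
          unfolding XS openin_subtopology by blast
        have "p' \<in> W'" using p' W'(2) by blast
        then obtain U2 where U2: "basicU J T U2" "p' \<in> Pi\<^sub>E J U2" "Pi\<^sub>E J U2 \<subseteq> W'"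
          using W'(1) unfolding openin_product_topology_alt basicU_def by meson
        define U3 where "U3 i = U2 i \<inter> U i" for i
        have U3o: "openin (T i) (U3 i)" "p' i \<in> U3 i" if "i \<in> J" for i
          using U2 bU that p' pU unfolding U3_def basicU_def Ob_def by auto
        have p'S: "p' \<in> S" using p' Ob_def by blast
        have "\<forall>i\<in>J. \<exists>V. openin (T i) V \<and> p' i \<in> V \<and> T i closure_of V \<subseteq> U3 i \<and>
                 (\<forall>a\<in>V. \<forall>b\<in>V. dd i a b < inverse (real (Suc n)))"
          using shrink U3o by simp
        then obtain Vf where Vf: "\<And>i. i \<in> J \<Longrightarrow> openin (T i) (Vf i) \<and> p' i \<in> Vf i \<and> T i closure_of (Vf i) \<subseteq> U3 i \<and>
                 (\<forall>a\<in>Vf i. \<forall>b\<in>Vf i. dd i a b < inverse (real (Suc n)))" by metis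
        have VfU3: "Vf i \<subseteq> U3 i" if "i \<in> J" for i
          using Vf[OF that] closure_of_subset[OF openin_subset] by blast
        define U' where "U' i = (if i \<in> F \<or> U3 i \<noteq> topspace (T i) then Vf i else topspace (T i))" for i
        have U'U3: "U' i \<subseteq> U3 i" if "i \<in> J" for i
          using VfU3[OF that] unfolding U'_def by auto
        have "{i \<in> J. U' i \<noteq> topspace (T i)} \<subseteq> F \<union> {i \<in> J. U2 i \<noteq> topspace (T i)} \<union> {i \<in> J. U i \<noteq> topspace (T i)}"
        proof (intro subsetI, elim CollectE conjE)
          fix i assume i: "i \<in> J" "U' i \<noteq> topspace (T i)"
          then have "i \<in> F \<or> U3 i \<noteq> topspace (T i)" unfolding U'_def
            by (cases "i \<in> F \<or> U3 i \<noteq> topspace (T i)") simp_all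
          moreover have "U3 i \<noteq> topspace (T i) \<Longrightarrow> U2 i \<noteq> topspace (T i) \<or> U i \<noteq> topspace (T i)"
            unfolding U3_def by auto
          ultimately show "i \<in> F \<union> {i \<in> J. U2 i \<noteq> topspace (T i)} \<union> {i \<in> J. U i \<noteq> topspace (T i)}"
            using i by blast
        qed
        moreover have "finite (F \<union> {i \<in> J. U2 i \<noteq> topspace (T i)} \<union> {i \<in> J. U i \<noteq> topspace (T i)})"
          using F U2(1) bU unfolding basicU_def by blast
        ultimately have "finite {i \<in> J. U' i \<noteq> topspace (T i)}" by (rule finite_subset)
        moreover have "openin (T i) (U' i)" if "i \<in> J" for i
        proof (cases "i \<in> F \<or> U3 i \<noteq> topspace (T i)")
          case True then show ?thesis using Vf[OF that] unfolding U'_def by simp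
        next
          case False then show ?thesis unfolding U'_def by simp
        qed
        ultimately have bU': "basicU J T U'" unfolding basicU_def by blast
        have p'U': "p' \<in> Pi\<^sub>E J U'"
        proof -
          have "p' i \<in> U' i" if "i \<in> J" for i
            using Vf[OF that] p'S SPi that unfolding U'_def by auto
          moreover have "p' \<in> extensional J" using p'S SPi by (auto simp: PiE_def)
          ultimately show ?thesis by (auto simp: PiE_def)
        qed
        have s1: "S \<inter> Pi\<^sub>E J U' \<subseteq> Gn n"
        proof
          fix q assume q: "q \<in> S \<inter> Pi\<^sub>E J U'"
          then have "q \<in> Pi\<^sub>E J U2" using U'U3 unfolding U3_def by (auto simp: PiE_def Pi_def)
          then show "q \<in> Gn n" using q U2(3) W'(2) by blast
        qed
        have s2: "T i closure_of (U' i) \<subseteq> U i" if i: "i \<in> J" for i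
        proof (cases "i \<in> F \<or> U3 i \<noteq> topspace (T i)")
          case True
          then show ?thesis using Vf[OF i] unfolding U'_def U3_def by auto
        next
          case False
          then have "U i = topspace (T i)" using bU i openin_subset unfolding U3_def basicU_def by blast
          then show ?thesis using False unfolding U'_def by (simp add: closure_of_subset_topspace)
        qed
        have s3: "\<forall>i\<in>F \<inter> J. \<forall>a\<in>U' i. \<forall>b\<in>U' i. dd i a b < inverse (real (Suc n))"
          using Vf unfolding U'_def by auto
        show ?thesis
          by (rule exI[where x="(p', U')"]) (use p'S p'U' bU' s1 s2 s3 in \<open>simp add: Inv_def step_def s\<close>)
      qed
      have I0: "Inv (p0, U0)" using U0 p0 O0 unfolding Inv_def by auto
      obtain sq F where sF: "sq 0 = (p0, U0)" "\<And>n. Inv (sq n) \<and> finite (F n) \<and> step n (F n) (sq n) (sq (Suc n))"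
        "\<And>l i. i \<in> supp (sq l) \<Longrightarrow> \<exists>N. \<forall>n\<ge>N. i \<in> F n"
        using bookkeeping[of Inv "(p0, U0)" supp step, OF I0 cs st] by blast
      define p where "p n = fst (sq n)" for n
      define U where "U n = snd (sq n)" for n
      have pS: "p n \<in> S" and pU: "p n \<in> Pi\<^sub>E J (U n)" and bU: "basicU J T (U n)" for n
        using sF(2)[of n] unfolding Inv_def p_def U_def by auto
      have stp: "S \<inter> Pi\<^sub>E J (U (Suc n)) \<subseteq> Gn n" "\<And>i. i \<in> J \<Longrightarrow> T i closure_of (U (Suc n) i) \<subseteq> U n i"
        "\<And>i. i \<in> F n \<Longrightarrow> i \<in> J \<Longrightarrow> \<forall>a\<in>U (Suc n) i. \<forall>b\<in>U (Suc n) i. dd i a b < inverse (real (Suc n))" for n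
        using sF(2)[of n] unfolding step_def p_def U_def by auto
      have Usuc: "U (Suc n) i \<subseteq> U n i" if "i \<in> J" for n i
        using stp(2)[OF that, of n] closure_of_subset[OF openin_subset] bU[of "Suc n"] that
        unfolding basicU_def by blast
      have Umono: "U m i \<subseteq> U n i" if "i \<in> J" "n \<le> m" for n m i
        using lift_Suc_antimono_le[of "\<lambda>n. U n i", OF Usuc[OF that(1)] that(2)] .
      have pin: "p m i \<in> U n i" if "i \<in> J" "n \<le> m" for n m i
        using pU[of m] Umono[OF that] that(1) by auto
      have ptop: "p m i \<in> topspace (T i)" if "i \<in> J" for m i
        using pS[of m] SPi that by auto
      have lim: "\<exists>l. limitin (T i) (\<lambda>m. p m i) l sequentially" if i: "i \<in> J" and sp: "\<exists>l. i \<in> supp (sq l)" for i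
      proof (rule compl[OF i])
        show "range (\<lambda>m. p m i) \<subseteq> topspace (T i)" using ptop[OF i] by auto
        obtain N where N: "\<And>n. n \<ge> N \<Longrightarrow> i \<in> F n" using sF(3) sp by blast
        show "\<forall>e>0. \<exists>N. \<forall>n\<ge>N. \<forall>m\<ge>N. dd i (p n i) (p m i) < e"
        proof (intro allI impI)
          fix e :: real assume "e > 0"
          then obtain k where k: "inverse (real (Suc k)) < e" using reals_Archimedean by blast
          define n where "n = max k N"
          have "inverse (real (Suc n)) \<le> inverse (real (Suc k))" unfolding n_def
            by (simp add: le_imp_inverse_le)
          moreover have "i \<in> F n" using N n_def by simp
          ultimately have "\<forall>a\<in>U (Suc n) i. \<forall>b\<in>U (Suc n) i. dd i a b < e"
          proof (intro ballI)
            fix a b assume ab: "a \<in> U (Suc n) i" "b \<in> U (Suc n) i" and le: "inverse (real (Suc n)) \<le> inverse (real (Suc k))"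
              and iF: "i \<in> F n"
            have "dd i a b < inverse (real (Suc n))" using stp(3)[OF iF i] ab by blast
            then show "dd i a b < e" using le k by linarith
          qed
          then show "\<exists>N. \<forall>n\<ge>N. \<forall>m\<ge>N. dd i (p n i) (p m i) < e" using pin[OF i, of "Suc n"] by blast
        qed
      qed
      define y where "y = restrict (\<lambda>i. if \<exists>l. i \<in> supp (sq l) then (SOME l. limitin (T i) (\<lambda>m. p m i) l sequentially) else 0) J"
      have ylim: "limitin (T i) (\<lambda>m. p m i) (y i) sequentially" if i: "i \<in> J" for i
      proof (cases "\<exists>l. i \<in> supp (sq l)")
        case True
        then show ?thesis unfolding y_def using i someI_ex[OF lim[OF i True]] by simp
      next
        case False
        then have "p m i = 0" for m using i unfolding supp_def p_def by auto
        then show ?thesis unfolding y_def using i False z0[OF i] by simp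
      qed
      have yS: "y \<in> S"
      proof -
        have "y i \<in> topspace (T i)" if "i \<in> J" for i using ylim[OF that] limitin_topspace by metis
        moreover have "y \<in> extensional J" unfolding y_def by simp
        ultimately have "y \<in> Pi\<^sub>E J (\<lambda>j. topspace (T j))" by (auto simp: PiE_def)
        moreover have "{i\<in>J. y i \<noteq> 0} \<subseteq> (\<Union>l. supp (sq l))" unfolding y_def by auto
        moreover have "countable (\<Union>l. supp (sq l))" using cs sF(2) by blast
        ultimately show ?thesis unfolding S_def Sigma_product_def by (blast intro: countable_subset)
      qed
      have yU: "y \<in> Pi\<^sub>E J (U n)" for n
      proof -
        have "y i \<in> U n i" if i: "i \<in> J" for i
        proof -
          have "y i \<in> T i closure_of (U (Suc n) i)"
          proof (rule limitin_closedin[OF ylim[OF i]])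
            show "closedin (T i) (T i closure_of U (Suc n) i)" by simp
            show "\<forall>\<^sub>F x in sequentially. p x i \<in> T i closure_of U (Suc n) i"
              unfolding eventually_sequentially
              using pin[OF i] closure_of_subset[OF openin_subset] bU[of "Suc n"] i
              unfolding basicU_def by blast
          qed simp
          then show ?thesis using stp(2)[OF i] by blast
        qed
        moreover have "y \<in> extensional J" unfolding y_def by simp
        ultimately show ?thesis by (auto simp: PiE_def)
      qed
      have "y \<in> Gn n" for n using stp(1)[of n] yS yU by blast
      then have "y \<in> \<Inter>\<G>" using Gr by blast
      moreover have "y \<in> V0" using yS yU[of 0] U0(3) O0(2) sF(1) unfolding U_def by auto
      ultimately show ?thesis using yS tX by blast
    qed
  qed
qed



lemma (in Metric_space) shrink_lemma:
  assumes "openin mtopology U" "p \<in> U" "e > 0"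
  shows "\<exists>V. openin mtopology V \<and> p \<in> V \<and> mtopology closure_of V \<subseteq> U \<and> (\<forall>a\<in>V. \<forall>b\<in>V. d a b < e)"
proof -
  obtain r where r: "r > 0" "mball p r \<subseteq> U" using assms(1,2) unfolding openin_mtopology by blast
  have pM: "p \<in> M" using assms(1,2) openin_mtopology by blast
  define r' where "r' = min (r/2) (e/2)"
  have r'0: "r' > 0" using r assms(3) unfolding r'_def by simp
  show ?thesis
  proof (intro exI conjI ballI)
    show "openin mtopology (mball p r')" by (rule openin_mball)
    show "p \<in> mball p r'" using pM r'0 by simp
    have "mtopology closure_of mball p r' \<subseteq> mcball p r'"
      by (rule closure_of_minimal[OF mball_subset_mcball closedin_mcball])
    also have "mcball p r' \<subseteq> mball p r" using r r'0 unfolding r'_def by (auto simp: subset_iff)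
    finally show "mtopology closure_of mball p r' \<subseteq> U" using r by blast
    fix a b assume "a \<in> mball p r'" "b \<in> mball p r'"
    then have "d p a < r'" "d p b < r'" "a \<in> M" "b \<in> M" by auto
    moreover have "d a b \<le> d a p + d p b" using triangle pM \<open>a \<in> M\<close> \<open>b \<in> M\<close> by blast
    ultimately show "d a b < e" unfolding r'_def using commute[of a p] by linarith
  qed
qed

lemma (in Metric_space) complete_lemma:
  assumes "mcomplete" "range \<sigma> \<subseteq> M" "\<forall>e>0. \<exists>N. \<forall>n\<ge>N. \<forall>m\<ge>N. d (\<sigma> n) (\<sigma> m) < e"
  shows "\<exists>l. limitin mtopology \<sigma> l sequentially"
proof -
  have "MCauchy \<sigma>" unfolding MCauchy_def using assms(2,3) by simp
  then show ?thesis using assms(1) unfolding mcomplete_def by simp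
qed

theorem mainTheorem15:
  fixes J :: "'j set" and T :: "'j \<Rightarrow> 'a::real_vector topology"
  assumes "uncountable J"
    and "\<And>j. j \<in> J \<Longrightarrow> subspace (topspace (T j))"
    and "\<And>j. j \<in> J \<Longrightarrow> is_tvs (topspace (T j)) (T j) (+) (*\<^sub>R) 0"
    and "\<And>j. j \<in> J \<Longrightarrow> completely_metrizable_space (T j)"
    and "\<And>j. j \<in> J \<Longrightarrow> topspace (T j) \<noteq> {0}"
  shows "is_tvs (Sigma_product J (\<lambda>j. topspace (T j))) (Sigma_topology J T)
            (prod_add J) (prod_smul J) (prod_zero J)
       \<and> Baire_space (Sigma_topology J T)
       \<and> \<not> metrizable_space (Sigma_topology J T)
       \<and> Frechet_Urysohn_space (Sigma_topology J T)
       \<and> \<not> countable_cn_character (Sigma_topology J T)"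
proof -
  have z0: "0 \<in> topspace (T j)" if "j \<in> J" for j using assms(3)[OF that] unfolding is_tvs_def by blast
  have cadd: "continuous_map (prod_topology (T j) (T j)) (T j) (\<lambda>(x, y). x + y)" if "j \<in> J" for j
    using assms(3)[OF that] unfolding is_tvs_def by blast
  have csm: "continuous_map (prod_topology euclideanreal (T j)) (T j) (\<lambda>(c, x). c *\<^sub>R x)" if "j \<in> J" for j
    using assms(3)[OF that] unfolding is_tvs_def by blast
  have met: "metrizable_space (T j)" if "j \<in> J" for j
    using assms(4)[OF that] completely_metrizable_imp_metrizable_space by blast
  have sep: "\<exists>e U. e \<in> topspace (T j) \<and> openin (T j) U \<and> 0 \<in> U \<and> e \<notin> U" if j: "j \<in> J" for j
  proof -
    obtain e where e: "e \<in> topspace (T j)" "e \<noteq> 0" using assms(5)[OF j] z0[OF j] by blast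
    have "Hausdorff_space (T j)" using met[OF j] metrizable_imp_Hausdorff_space by blast
    then obtain U V where "openin (T j) U" "openin (T j) V" "0 \<in> U" "e \<in> V" "disjnt U V"
      using e z0[OF j] unfolding Hausdorff_space_def by metis
    then show ?thesis using e by (auto simp: disjnt_iff)
  qed
  have ncn: "\<not> countable_cn_character (Sigma_topology J T)"
    by (rule not_cn[OF assms(1) z0 sep])
  have nmet: "\<not> metrizable_space (Sigma_topology J T)"
    using ncn first_countable_cn metrizable_imp_first_countable by blast
  have FU: "Frechet_Urysohn_space (Sigma_topology J T)"
  proof (rule sigma_FU)
    fix j assume j: "j \<in> J"
    show "0 \<in> topspace (T j)" using z0[OF j] .
    show "first_countable (T j)" using met[OF j] by (rule metrizable_imp_first_countable)
  qed
  have "\<forall>j\<in>J. \<exists>M d. Metric_space M d \<and> Metric_space.mcomplete M d \<and> T j = Metric_space.mtopology M d"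
    using assms(4) unfolding completely_metrizable_space_def by blast
  then obtain MM :: "'j \<Rightarrow> 'a set" and dd where MM: "\<And>j. j \<in> J \<Longrightarrow> Metric_space (MM j) (dd j) \<and> Metric_space.mcomplete (MM j) (dd j) \<and> T j = Metric_space.mtopology (MM j) (dd j)"
    by metis
  have Bai: "Baire_space (Sigma_topology J T)"
  proof (rule sigma_baire[OF z0])
    fix j U p and e :: real assume "j \<in> J" "openin (T j) U" "p \<in> U" "0 < e"
    then show "\<exists>V. openin (T j) V \<and> p \<in> V \<and> T j closure_of V \<subseteq> U \<and> (\<forall>a\<in>V. \<forall>b\<in>V. dd j a b < e)"
      using MM[of j] Metric_space.shrink_lemma[of "MM j" "dd j" U p e] by metis
  next
    fix j and \<sigma> :: "nat \<Rightarrow> 'a" assume "j \<in> J" "range \<sigma> \<subseteq> topspace (T j)" "\<forall>e>0. \<exists>N. \<forall>n\<ge>N. \<forall>m\<ge>N. dd j (\<sigma> n) (\<sigma> m) < e"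
    then show "\<exists>l. limitin (T j) \<sigma> l sequentially"
      using MM[of j] Metric_space.complete_lemma[of "MM j" "dd j" \<sigma>] Metric_space.topspace_mtopology[of "MM j" "dd j"] by metis
  qed
  have tvs: "is_tvs (Sigma_product J (\<lambda>j. topspace (T j))) (Sigma_topology J T) (prod_add J) (prod_smul J) (prod_zero J)"
    by (rule sigma_tvs[OF assms(2) cadd csm])
  show ?thesis using tvs Bai nmet FU ncn by blast
qed

end
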